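(* Let $0\le\beta\le1$ and let $f\in\mathcal{A}_{\beta}$ with $f(z)=z+\sum_{n=2}^\infty a_nz^n$, and let $f^{-1}(w)=w+\sum_{n=2}^\infty A_nw^n$ be the inverse of $f$ near $0$, so that $A_2=-a_2$ and $A_3=-a_3+2a_2^2$. Then \[ |A_2|\le\frac{2}{2-\beta}\qquad\text{and}\qquad |A_3|\le\frac{2(8-4\beta-\beta^2)}{(2-\beta)^2(3-2\beta)}. \] Both bounds are sharp (attained by some $f\in\mathcal{A}_\beta$).
   Context: $\mathbb{D}$ is the open unit disk; $\mathcal{A}$ is the class of holomorphic $f$ on $\mathbb{D}$ with $f(0)=0$, $f'(0)=1$. For $\beta\in[0,1]$, $\mathcal{A}_{\beta}=\{f\in\mathcal{A}: \operatorname{Re}\big(\beta\, f(z)/z+(1-\beta)f'(z)\big)>0 \text{ for all } z\in\mathbb{D}\}$. The inverse coefficients $A_n$ are the Taylor coefficients of the local inverse $f^{-1}$ at $0$ (which exists since $f'(0)=1$). *)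

theory Defs
  imports "HOL-Analysis.Analysis"
begin

definition class_A :: "(complex \<Rightarrow> complex) set" where
  "class_A = {f. f holomorphic_on ball 0 1 \<and> f 0 = 0 \<and> deriv f 0 = 1}"

text \<open>The class A_beta. At z = 0 the quotient f z / z is understood as its limit f'(0) = 1,
  where the condition holds automatically; hence only z \<noteq> 0 is required.\<close>
definition class_A_beta :: "real \<Rightarrow> (complex \<Rightarrow> complex) set" where
  "class_A_beta \<beta> = {f \<in> class_A. \<forall>z\<in>ball 0 1. z \<noteq> 0 \<longrightarrow>
      Re (of_real \<beta> * (f z / z) + of_real (1 - \<beta>) * deriv f z) > 0}"

definition local_inverse :: "(complex \<Rightarrow> complex) \<Rightarrow> (complex \<Rightarrow> complex) \<Rightarrow> real \<Rightarrow> bool" where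
  "local_inverse f g r \<longleftrightarrow> 0 < r \<and> g holomorphic_on ball 0 r \<and> g 0 = 0 \<and>
      g ` ball 0 r \<subseteq> ball 0 1 \<and> (\<forall>w\<in>ball 0 r. f (g w) = w)"

definition taylor_coeff :: "(complex \<Rightarrow> complex) \<Rightarrow> nat \<Rightarrow> complex" where
  "taylor_coeff g n = (deriv ^^ n) g 0 / of_nat (fact n)"

end

theory Submission
  imports Defs "HOL-Complex_Analysis.Complex_Analysis"
begin

lemma compose_coeffs:
  fixes F G :: "complex fps"
  assumes "F oo G = fps_X" "fps_nth G 0 = 0" "fps_nth F 1 = 1"
  shows "fps_nth G 1 = 1" "fps_nth G 2 = - fps_nth F 2" "fps_nth G 3 = 2 * (fps_nth F 2)^2 - fps_nth F 3"
proof -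
  have c: "fps_nth (F oo G) n = (if n = 1 then 1 else 0)" for n using assms(1) by simp
  have e1: "fps_nth (F oo G) 1 = fps_nth F 1 * fps_nth G 1" using assms(2) by (simp add: fps_compose_nth)
  show g1: "fps_nth G 1 = 1" using e1 c[of 1] assms(3) by simp
  have e2: "fps_nth (F oo G) 2 = fps_nth G 2 + fps_nth F 2 * (fps_nth G 1)^2" using assms(2,3)
    by (simp add: fps_compose_nth numeral_eq_Suc atLeast0AtMost atMost_Suc fps_mult_nth power2_eq_square)
  have "fps_nth G 2 + fps_nth F 2 = 0" using e2 c[of 2] g1 by simp
  then show g2: "fps_nth G 2 = - fps_nth F 2" by (simp add: eq_neg_iff_add_eq_0)
  have e3: "fps_nth (F oo G) 3 = fps_nth G 3 + fps_nth F 2 * (2 * fps_nth G 1 * fps_nth G 2) + fps_nth F 3 * (fps_nth G 1)^3" using assms(2,3)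
    by (simp add: fps_compose_nth numeral_eq_Suc atLeast0AtMost atMost_Suc fps_mult_nth power2_eq_square power3_eq_cube algebra_simps)
  show "fps_nth G 3 = 2 * (fps_nth F 2)^2 - fps_nth F 3" using e3 c[of 3] g1 g2 by (simp add: algebra_simps power2_eq_square)
qed

lemma fps_exp_unique:
  fixes f g :: "complex \<Rightarrow> complex"
  assumes "f has_fps_expansion F" "g has_fps_expansion G" "eventually (\<lambda>z. f z = g z) (nhds 0)"
  shows "F = G"
proof -
  have "g has_fps_expansion F" using has_fps_expansion_cong[OF assms(3) refl] assms(1) by simp
  then show ?thesis using assms(2) by (intro fps_ext) (simp add: fps_nth_fps_expansion)
qed

lemma classA_fps:
  assumes "f \<in> class_A"
  shows "f has_fps_expansion fps_expansion f 0" "fps_nth (fps_expansion f 0) 0 = 0"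
    "fps_nth (fps_expansion f 0) 1 = 1"
proof -
  show h: "f has_fps_expansion fps_expansion f 0"
    using assms unfolding class_A_def by (intro has_fps_expansion_fps_expansion[of "ball 0 1"]) auto
  show "fps_nth (fps_expansion f 0) 0 = 0" using fps_nth_fps_expansion[OF h, of 0] assms
    by (simp add: class_A_def)
  show "fps_nth (fps_expansion f 0) 1 = 1" using fps_nth_fps_expansion[OF h, of 1] assms
    by (simp add: class_A_def)
qed

lemma inverse_coeffs:
  assumes f: "f \<in> class_A" and g: "local_inverse f g r"
  shows "taylor_coeff g 2 = - fps_nth (fps_expansion f 0) 2"
    "taylor_coeff g 3 = 2 * (fps_nth (fps_expansion f 0) 2)^2 - fps_nth (fps_expansion f 0) 3"
proof -
  define F where "F = fps_expansion f 0"
  define G where "G = fps_expansion g 0"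
  note hF = classA_fps[OF f, folded F_def]
  have hG: "g has_fps_expansion G"
    using g unfolding G_def local_inverse_def by (intro has_fps_expansion_fps_expansion[of "ball 0 r"]) auto
  have G0: "fps_nth G 0 = 0" using fps_nth_fps_expansion[OF hG, of 0] g
    by (simp add: local_inverse_def)
  have hc: "(f \<circ> g) has_fps_expansion (F oo G)"
    by (rule has_fps_expansion_compose[OF hF(1) hG G0])
  have ev: "eventually (\<lambda>z. (f \<circ> g) z = z) (nhds 0)"
  proof -
    have "eventually (\<lambda>z. z \<in> ball 0 r) (nhds 0)"
      using g by (intro eventually_nhds_in_open) (auto simp: local_inverse_def)
    then show ?thesis by eventually_elim (use g in \<open>auto simp: local_inverse_def\<close>)
  qed
  have "F oo G = fps_X" using fps_exp_unique[OF hc has_fps_expansion_fps_X ev] .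
  note cc = compose_coeffs[OF this G0 hF(3)]
  have tc: "taylor_coeff g n = fps_nth G n" for n
    using fps_nth_fps_expansion[OF hG, of n] by (simp add: taylor_coeff_def)
  show "taylor_coeff g 2 = - fps_nth F 2" using tc cc by simp
  show "taylor_coeff g 3 = 2 * (fps_nth F 2)^2 - fps_nth F 3" using tc cc by simp
qed

lemma hol_ball_fps:
  fixes h :: "complex \<Rightarrow> complex"
  assumes "h holomorphic_on (ball 0 1 - {0})" "h has_fps_expansion H"
  shows "h holomorphic_on ball 0 1"
proof (rule no_isolated_singularity'[where K="{0}"])
  fix z assume "z \<in> {0::complex}"
  then show "(h \<longlongrightarrow> h z) (at z within ball 0 1)"
    using has_fps_expansion_imp_continuous[OF assms(2), of "ball 0 1"] by (simp add: continuous_within)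
qed (use assms in auto)

definition pfun :: "real \<Rightarrow> (complex \<Rightarrow> complex) \<Rightarrow> complex \<Rightarrow> complex" where
  "pfun \<beta> f z = (if z = 0 then 1 else of_real \<beta> * (f z / z) + of_real (1 - \<beta>) * deriv f z)"

definition pfps :: "real \<Rightarrow> complex fps \<Rightarrow> complex fps" where
  "pfps \<beta> F = fps_const (of_real \<beta>) * fps_shift 1 F + fps_const (of_real (1 - \<beta>)) * fps_deriv F"

lemma pfps_nth: "fps_nth (pfps \<beta> F) n = (of_real \<beta> + of_real (1 - \<beta>) * of_nat (n+1)) * fps_nth F (n+1)"
  by (simp add: pfps_def algebra_simps)

lemma p_props:
  assumes f: "f \<in> class_A_beta \<beta>"
  shows "pfun \<beta> f has_fps_expansion pfps \<beta> (fps_expansion f 0)"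
    "pfun \<beta> f holomorphic_on ball 0 1" "pfun \<beta> f 0 = 1"
    "\<And>z. z \<in> ball 0 1 \<Longrightarrow> Re (pfun \<beta> f z) > 0"
proof -
  define F where "F = fps_expansion f 0"
  have fA: "f \<in> class_A" using f by (simp add: class_A_beta_def)
  note hF = classA_fps[OF fA, folded F_def]
  have F0: "F \<noteq> 0" using hF(3) by auto
  have sd: "1 \<le> subdegree F" using F0 hF(2) by (simp add: Suc_leI subdegree_pos_iff)
  have h1: "(\<lambda>x. if x = 0 then fps_nth F 1 else f x / x ^ 1) has_fps_expansion fps_shift 1 F"
    by (rule has_fps_expansion_shift[OF hF(1) sd refl])
  have h2: "(\<lambda>x. of_real \<beta> * (if x = 0 then fps_nth F 1 else f x / x ^ 1) + of_real (1 - \<beta>) * deriv f x)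
     has_fps_expansion pfps \<beta> F"
    unfolding pfps_def
    by (intro has_fps_expansion_add has_fps_expansion_cmult_left h1 has_fps_expansion_deriv hF(1))
  have eq: "(\<lambda>x. of_real \<beta> * (if x = 0 then fps_nth F 1 else f x / x ^ 1) + of_real (1 - \<beta>) * deriv f x)
     = pfun \<beta> f"
    using fA hF(3) by (auto simp: pfun_def class_A_def fun_eq_iff algebra_simps)
  show hp: "pfun \<beta> f has_fps_expansion pfps \<beta> (fps_expansion f 0)" using h2 eq F_def by simp
  show "pfun \<beta> f 0 = 1" by (simp add: pfun_def)
  have "(\<lambda>z. of_real \<beta> * (f z / z) + of_real (1 - \<beta>) * deriv f z) holomorphic_on (ball 0 1 - {0})"
  proof -
    have hf: "f holomorphic_on ball 0 1" using fA by (simp add: class_A_def)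
    have hd: "deriv f holomorphic_on ball 0 1" using hf by (simp add: holomorphic_deriv)
    have a: "f holomorphic_on (ball 0 1 - {0})" using hf by (rule holomorphic_on_subset) auto
    have b: "deriv f holomorphic_on (ball 0 1 - {0})" using hd by (rule holomorphic_on_subset) auto
    have c: "(\<lambda>z. f z / z) holomorphic_on (ball 0 1 - {0})"
      by (intro holomorphic_on_divide a holomorphic_intros) auto
    show ?thesis by (intro holomorphic_on_add holomorphic_on_mult holomorphic_on_const c b)
  qed
  then have "pfun \<beta> f holomorphic_on (ball 0 1 - {0})"
    by (rule holomorphic_transform) (auto simp: pfun_def)
  then show "pfun \<beta> f holomorphic_on ball 0 1" using hol_ball_fps hp by blast
  show "Re (pfun \<beta> f z) > 0" if "z \<in> ball 0 1" for z
    using f that by (auto simp: pfun_def class_A_beta_def)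
qed

lemma mobius_lt:
  fixes a b :: complex
  assumes "cmod a < 1" "cmod b < 1"
  shows "cmod (b - a) < cmod (1 - cnj a * b)"
proof -
  have "(cmod a)^2 < 1" "(cmod b)^2 < 1" using assms by (simp_all add: abs_square_less_1)
  then have ha: "(Re a)^2 + (Im a)^2 < 1" and hb: "(Re b)^2 + (Im b)^2 < 1" by (simp_all add: cmod_power2)
  have pos: "0 < (1 - (Re a)^2 - (Im a)^2) * (1 - (Re b)^2 - (Im b)^2)" using ha hb by simp
  have "(cmod (1 - cnj a * b))^2 - (cmod (b - a))^2 = (1 - (Re a)^2 - (Im a)^2) * (1 - (Re b)^2 - (Im b)^2)"
    unfolding cmod_power2 by (simp add: power2_eq_square algebra_simps)
  then have "(cmod (b - a))^2 < (cmod (1 - cnj a * b))^2" using pos by linarith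
  then show ?thesis by (meson norm_ge_zero power_less_imp_less_base)
qed

lemma rot_fps:
  fixes w :: "complex \<Rightarrow> complex"
  assumes "w has_fps_expansion W" "\<forall>z. norm z < 1 \<longrightarrow> w z = \<alpha> * z"
  shows "fps_nth W 1 = \<alpha>" "fps_nth W 2 = 0"
proof -
  have h: "(\<lambda>z. \<alpha> * z) has_fps_expansion fps_const \<alpha> * fps_X"
    by (intro has_fps_expansion_cmult_left has_fps_expansion_fps_X)
  have ev: "eventually (\<lambda>z. w z = \<alpha> * z) (nhds 0)"
  proof -
    have "eventually (\<lambda>z. z \<in> ball 0 1) (nhds (0::complex))"
      by (intro eventually_nhds_in_open) auto
    then show ?thesis by eventually_elim (use assms(2) in auto)
  qed
  have "W = fps_const \<alpha> * fps_X" using fps_exp_unique[OF assms(1) h ev] .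
  then show "fps_nth W 1 = \<alpha>" "fps_nth W 2 = 0" by simp_all
qed

lemma schwarz2:
  fixes w :: "complex \<Rightarrow> complex"
  assumes hw: "w holomorphic_on ball 0 1" and w0: "w 0 = 0"
    and lt: "\<And>z. norm z < 1 \<Longrightarrow> norm (w z) < 1" and hW: "w has_fps_expansion W"
  shows "cmod (fps_nth W 1) \<le> 1" "cmod (fps_nth W 2) \<le> 1 - (cmod (fps_nth W 1))^2"
proof -
  have W1: "fps_nth W 1 = deriv w 0" using fps_nth_fps_expansion[OF hW, of 1] by simp
  have W0: "fps_nth W 0 = 0" using fps_nth_fps_expansion[OF hW, of 0] w0 by simp
  note S = Schwarz_Lemma'[OF hw w0 lt]
  show a1: "cmod (fps_nth W 1) \<le> 1" using S W1 by simp
  show "cmod (fps_nth W 2) \<le> 1 - (cmod (fps_nth W 1))^2"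
  proof (cases "W = 0")
    case True then show ?thesis by simp
  next
    case False
    have sd: "1 \<le> subdegree W" using False W0 by (simp add: Suc_leI subdegree_pos_iff)
    define a where "a = fps_nth W 1"
    define \<phi> where "\<phi> = (\<lambda>x. if x = 0 then a else w x / x ^ 1)"
    have h\<phi>: "\<phi> has_fps_expansion fps_shift 1 W"
      unfolding \<phi>_def a_def by (rule has_fps_expansion_shift[OF hW sd refl])
    have "(\<lambda>x. w x / x) holomorphic_on (ball 0 1 - {0})"
      by (intro holomorphic_on_divide holomorphic_intros holomorphic_on_subset[OF hw]) auto
    then have "\<phi> holomorphic_on (ball 0 1 - {0})"
      by (rule holomorphic_transform) (auto simp: \<phi>_def)
    then have hol\<phi>: "\<phi> holomorphic_on ball 0 1" using hol_ball_fps h\<phi> by blast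
    have d\<phi>: "deriv \<phi> 0 = fps_nth W 2" using fps_nth_fps_expansion[OF h\<phi>, of 1] by (simp add: numeral_2_eq_2)
    show ?thesis
    proof (cases "cmod a = 1")
      case True
      then obtain \<alpha> where "\<forall>z. norm z < 1 \<longrightarrow> w z = \<alpha> * z" using S W1 a_def by auto
      then have "fps_nth W 2 = 0" using rot_fps[OF hW] by blast
      then show ?thesis using True a_def by simp
    next
      case False
      then have a1': "cmod a < 1" using a1 a_def by simp
      have \<phi>lt: "cmod (\<phi> z) < 1" if z: "norm z < 1" for z
      proof (cases "z = 0")
        case True then show ?thesis using a1' by (simp add: \<phi>_def)
      next
        case z0: False
        have "cmod (w z) \<le> cmod z" using S z by blast
        then have le: "cmod (\<phi> z) \<le> 1" using z0 by (simp add: \<phi>_def norm_divide divide_le_eq_1)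
        have "cmod (\<phi> z) \<noteq> 1"
        proof
          assume "cmod (\<phi> z) = 1"
          then have "norm (w z) = norm z" using z0 by (simp add: \<phi>_def norm_divide divide_eq_1_iff)
          then obtain \<alpha> where "\<forall>z. norm z < 1 \<longrightarrow> w z = \<alpha> * z" "norm \<alpha> = 1" using S z z0 by blast
          then have "a = \<alpha>" using rot_fps[OF hW] a_def by blast
          then show False using False \<open>norm \<alpha> = 1\<close> by simp
        qed
        then show ?thesis using le by simp
      qed
      define \<psi> where "\<psi> = (\<lambda>z. (\<phi> z - a) / (1 - cnj a * \<phi> z))"
      have den: "1 - cnj a * \<phi> z \<noteq> 0" if "norm z < 1" for z
      proof -
        have "cmod a * cmod (\<phi> z) < 1 * 1"
          using a1' \<phi>lt[OF that] by (intro mult_strict_mono') auto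
        then have "cmod (cnj a * \<phi> z) < 1" by (simp add: norm_mult)
        then show ?thesis by auto
      qed
      have hol\<psi>: "\<psi> holomorphic_on ball 0 1"
        unfolding \<psi>_def using den
        by (intro holomorphic_on_divide holomorphic_intros hol\<phi>) auto
      have \<psi>0: "\<psi> 0 = 0" by (simp add: \<psi>_def \<phi>_def)
      have \<psi>lt: "norm (\<psi> z) < 1" if "norm z < 1" for z
        using mobius_lt[OF a1' \<phi>lt[OF that]] den[OF that]
        by (simp add: \<psi>_def norm_divide divide_less_eq_1)
      have "norm (deriv \<psi> 0) \<le> 1" using Schwarz_Lemma'[OF hol\<psi> \<psi>0 \<psi>lt] by blast
      have D\<phi>: "(\<phi> has_field_derivative fps_nth W 2) (at 0)"
        using holomorphic_derivI[OF hol\<phi>, of 0] d\<phi> by simp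
      have caa: "cnj a * a = of_real ((cmod a)^2)" by (simp add: complex_norm_square mult.commute del: of_real_power)
      have D0: "1 - cnj a * \<phi> 0 = of_real (1 - (cmod a)^2)" using caa by (simp add: \<phi>_def)
      have pos: "1 - (cmod a)^2 > 0" using a1' by (simp add: abs_square_less_1)
      have \<phi>0: "\<phi> 0 = a" by (simp add: \<phi>_def)
      have N: "((\<lambda>z. \<phi> z - a) has_field_derivative fps_nth W 2) (at 0)"
        using DERIV_diff[OF D\<phi> DERIV_const[of a]] by simp
      have Dd: "((\<lambda>z. 1 - cnj a * \<phi> z) has_field_derivative - (cnj a * fps_nth W 2)) (at 0)"
        using DERIV_diff[OF DERIV_const[of 1] DERIV_cmult[OF D\<phi>, of "cnj a"]] by simp
      have "(\<psi> has_field_derivative fps_nth W 2 / of_real (1 - (cmod a)^2)) (at 0)"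
        using DERIV_quotient[OF N Dd] den[of 0] D0 pos \<phi>0
        by (simp add: \<psi>_def power2_eq_square del: of_real_diff of_real_power)
      then have "deriv \<psi> 0 = fps_nth W 2 / of_real (1 - (cmod a)^2)" by (rule DERIV_imp_deriv)
      with \<open>norm (deriv \<psi> 0) \<le> 1\<close> have "cmod (fps_nth W 2) / (1 - (cmod a)^2) \<le> 1"
      proof -
        have "cmod (of_real (1 - (cmod a)^2) :: complex) = 1 - (cmod a)^2"
          using pos by (simp only: norm_of_real abs_of_pos)
        then show ?thesis using \<open>norm (deriv \<psi> 0) \<le> 1\<close> \<open>deriv \<psi> 0 = _\<close>
          by (simp add: norm_divide del: of_real_diff of_real_power)
      qed
      then show ?thesis using pos a_def by (simp add: divide_le_eq)
    qed
  qed
qed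

lemma cara:
  fixes p :: "complex \<Rightarrow> complex"
  assumes hp: "p holomorphic_on ball 0 1" and p0: "p 0 = 1"
    and re: "\<And>z. z \<in> ball 0 1 \<Longrightarrow> Re (p z) > 0" and hP: "p has_fps_expansion P"
  shows "\<exists>c1 c2. fps_nth P 1 = 2 * c1 \<and> fps_nth P 2 = 2 * c2 + 2 * c1^2 \<and>
           cmod c1 \<le> 1 \<and> cmod c2 \<le> 1 - (cmod c1)^2"
proof -
  define w where "w = (\<lambda>z. (p z - 1) / (p z + 1))"
  have nz: "p z + 1 \<noteq> 0" if "z \<in> ball 0 1" for z
  proof
    assume "p z + 1 = 0"
    then have "Re (p z + 1) = 0" by simp
    then show False using re[OF that] by simp
  qed
  have hw: "w holomorphic_on ball 0 1" unfolding w_def using nz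
    by (intro holomorphic_intros hp) auto
  have w0: "w 0 = 0" by (simp add: w_def p0)
  have wlt: "norm (w z) < 1" if "norm z < 1" for z
  proof -
    have z: "z \<in> ball 0 1" using that by simp
    have "(cmod (p z - 1))^2 < (cmod (p z + 1))^2"
      unfolding cmod_power2 using re[OF z] by (simp add: power2_eq_square algebra_simps)
    then have "cmod (p z - 1) < cmod (p z + 1)" by (meson norm_ge_zero power_less_imp_less_base)
    then show ?thesis using nz[OF z] by (simp add: w_def norm_divide divide_less_eq_1)
  qed
  define W where "W = fps_expansion w 0"
  have hW: "w has_fps_expansion W"
    unfolding W_def using hw by (intro has_fps_expansion_fps_expansion[of "ball 0 1"]) auto
  have W0: "fps_nth W 0 = 0" using fps_nth_fps_expansion[OF hW, of 0] w0 by simp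
  have P0: "fps_nth P 0 = 1" using fps_nth_fps_expansion[OF hP, of 0] p0 by simp
  have h1: "(\<lambda>z. w z * (p z + 1)) has_fps_expansion W * (P + fps_const 1)"
    by (intro has_fps_expansion_mult has_fps_expansion_add hW hP has_fps_expansion_const)
  have h2: "(\<lambda>z. p z - 1) has_fps_expansion P - fps_const 1"
    by (intro has_fps_expansion_diff hP has_fps_expansion_const)
  have ev: "eventually (\<lambda>z. w z * (p z + 1) = p z - 1) (nhds 0)"
  proof -
    have "eventually (\<lambda>z. z \<in> ball 0 1) (nhds (0::complex))"
      by (intro eventually_nhds_in_open) auto
    then show ?thesis by eventually_elim (use nz in \<open>auto simp: w_def\<close>)
  qed
  have E: "W * (P + fps_const 1) = P - fps_const 1" using fps_exp_unique[OF h1 h2 ev] .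
  have e1: "fps_nth (W * (P + fps_const 1)) 1 = 2 * fps_nth W 1" using W0 P0
    by (simp add: fps_mult_nth numeral_eq_Suc atLeast0AtMost atMost_Suc)
  have e2: "fps_nth (W * (P + fps_const 1)) 2 = fps_nth W 1 * fps_nth P 1 + 2 * fps_nth W 2" using W0 P0
    by (simp add: fps_mult_nth numeral_eq_Suc atLeast0AtMost atMost_Suc)
  have Ek: "fps_nth (W * (P + fps_const 1)) k = fps_nth P k" if "k > 0" for k
    using that unfolding E by simp
  have P1: "fps_nth P 1 = 2 * fps_nth W 1" using e1 Ek[of 1] by simp
  have P2: "fps_nth P 2 = 2 * fps_nth W 2 + 2 * (fps_nth W 1)^2" using e2 Ek[of 2] P1
    by (simp add: power2_eq_square algebra_simps)
  note S2 = schwarz2[OF hw w0 wlt hW]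
  show ?thesis using P1 P2 S2 by blast
qed

lemma upper_bounds:
  fixes \<beta> :: real
  assumes b0: "0 \<le> \<beta>" and b1: "\<beta> \<le> 1" and f: "f \<in> class_A_beta \<beta>" and g: "local_inverse f g r"
  shows "cmod (taylor_coeff g 2) \<le> 2 / (2 - \<beta>) \<and>
            cmod (taylor_coeff g 3) \<le> 2 * (8 - 4 * \<beta> - \<beta>\<^sup>2) / ((2 - \<beta>)\<^sup>2 * (3 - 2 * \<beta>))"
proof -
  define F where "F = fps_expansion f 0"
  have fA: "f \<in> class_A" using f by (simp add: class_A_beta_def)
  note inv = inverse_coeffs[OF fA g, folded F_def]
  note pp = p_props[OF f, folded F_def]
  obtain c1 c2 where c: "fps_nth (pfps \<beta> F) 1 = 2 * c1" "fps_nth (pfps \<beta> F) 2 = 2 * c2 + 2 * c1^2"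
     "cmod c1 \<le> 1" "cmod c2 \<le> 1 - (cmod c1)^2"
    using cara[OF pp(2) pp(3) pp(4) pp(1)] by blast
  define u where "u = 2 - \<beta>"
  define v where "v = 3 - 2 * \<beta>"
  have u: "u > 0" "u \<le> 2" "u \<ge> 1" using b0 b1 by (auto simp: u_def)
  have v: "v > 0" using b0 b1 by (auto simp: v_def)
  have P1: "fps_nth (pfps \<beta> F) 1 = of_real u * fps_nth F 2"
    by (simp add: pfps_nth u_def algebra_simps numeral_2_eq_2)
  have P2: "fps_nth (pfps \<beta> F) 2 = of_real v * fps_nth F 3"
    by (simp add: pfps_nth v_def algebra_simps numeral_3_eq_3 numeral_2_eq_2)
  have F2: "fps_nth F 2 = 2 * c1 / of_real u" using P1 c(1) u(1)
    by (simp add: field_simps)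
  have F3: "fps_nth F 3 = (2 * c2 + 2 * c1^2) / of_real v" using P2 c(2) v
    by (simp add: field_simps)
  define K where "K = 8 / u^2 - 2 / v"
  have A3: "taylor_coeff g 3 = of_real K * c1^2 - of_real (2 / v) * c2"
    using u(1) v unfolding inv(2) F2 F3 K_def by (simp add: field_simps power2_eq_square)
  have bb: "\<beta> * \<beta> \<le> 1" using b0 b1 by (simp add: mult_le_one)
  have uv: "u^2 \<le> 2 * v" using bb unfolding u_def v_def by (simp add: power2_eq_square algebra_simps)
  have K2: "K - 2 / v \<ge> 0"
  proof -
    have "4 / v \<le> 8 / u^2" using uv u v by (simp add: field_simps)
    then show ?thesis by (simp add: K_def)
  qed
  have Kpos: "K \<ge> 0" using K2 v by (smt (verit) divide_pos_pos)
  have Kval: "K = 2 * (8 - 4 * \<beta> - \<beta>\<^sup>2) / ((2 - \<beta>)\<^sup>2 * (3 - 2 * \<beta>))"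
    using u(1) v unfolding K_def u_def v_def by (simp add: field_simps) (simp add: power2_eq_square algebra_simps)
  have "cmod (taylor_coeff g 3) \<le> cmod (of_real K * c1^2) + cmod (of_real (2 / v) * c2)"
    unfolding A3 by (rule norm_triangle_ineq4)
  also have "\<dots> = K * (cmod c1)^2 + (2 / v) * cmod c2"
    using Kpos v by (simp add: norm_mult norm_power norm_divide)
  also have "\<dots> \<le> K * (cmod c1)^2 + (2 / v) * (1 - (cmod c1)^2)"
    using c(4) v by (intro add_left_mono mult_left_mono) auto
  also have "\<dots> = 2 / v + (K - 2 / v) * (cmod c1)^2" by (simp add: algebra_simps)
  also have "\<dots> \<le> 2 / v + (K - 2 / v) * 1"
  proof -
    have "(cmod c1)^2 \<le> 1" using c(3) by (simp add: abs_square_le_1)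
    moreover have "K - 2 / v \<ge> 0" using K2 v by (smt (verit) divide_pos_pos)
    ultimately show ?thesis by (intro add_left_mono mult_left_mono) auto
  qed
  also have "\<dots> = K" by simp
  finally have B3: "cmod (taylor_coeff g 3) \<le> K" .
  have "cmod (taylor_coeff g 2) = 2 * cmod c1 / u"
    unfolding inv(1) F2 using u(1) by (simp add: norm_divide norm_mult)
  also have "\<dots> \<le> 2 / u" using c(3) u(1) by (simp add: divide_right_mono)
  finally show ?thesis using B3 Kval u_def by simp
qed

definition Fe :: "real \<Rightarrow> complex fps" where
  "Fe \<beta> = Abs_fps (\<lambda>n. if n = 0 then 0 else if n = 1 then 1
            else of_real (2 / (1 + (real n - 1) * (1 - \<beta>))))"

lemma Fe_nth_bound:
  assumes "0 \<le> \<beta>" "\<beta> \<le> 1"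
  shows "cmod (fps_nth (Fe \<beta>) n) \<le> 2"
proof (cases "n \<ge> 2")
  case True
  define d where "d = 1 + (real n - 1) * (1 - \<beta>)"
  have d: "d \<ge> 1" using True assms by (simp add: d_def)
  have e: "fps_nth (Fe \<beta>) n = of_real (2 / d)" using True unfolding Fe_def d_def by simp
  have "\<bar>2 / d\<bar> \<le> 2" using d by (simp add: divide_le_eq)
  then show ?thesis unfolding e by (simp only: norm_of_real)
next
  case False
  then have "n = 0 \<or> n = 1" by auto
  then show ?thesis by (auto simp: Fe_def)
qed

lemma Fe_radius:
  assumes "0 \<le> \<beta>" "\<beta> \<le> 1"
  shows "fps_conv_radius (Fe \<beta>) \<ge> 1"
  unfolding fps_conv_radius_def
proof (rule conv_radius_geI_ex')
  fix r :: real assume r: "0 < r" "ereal r < 1"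
  then have r1: "r < 1" by simp
  show "summable (\<lambda>n. fps_nth (Fe \<beta>) n * of_real r ^ n)"
  proof (rule summable_comparison_test')
    show "summable (\<lambda>n. 2 * r ^ n)" using r r1 by (intro summable_mult summable_geometric) auto
    fix n :: nat
    show "norm (fps_nth (Fe \<beta>) n * of_real r ^ n) \<le> 2 * r ^ n"
      using Fe_nth_bound[OF assms, of n] r by (simp add: norm_mult norm_power mult_right_mono)
  qed
qed

lemma Re_moeb:
  fixes z :: complex
  assumes "norm z < 1"
  shows "Re ((1 + z) / (1 - z)) > 0"
proof -
  have "(cmod z)^2 < 1" using assms by (simp add: abs_square_less_1)
  then have a: "(Re z)^2 + (Im z)^2 < 1" by (simp add: cmod_power2)
  have "Re z < 1" using assms abs_Re_le_cmod[of z] by linarith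
  then have "(Re (1 - z))^2 > 0" by simp
  then have b: "(Re (1 - z))^2 + (Im (1 - z))^2 > 0" by (simp add: add_pos_nonneg)
  have "Re (1 + z) * Re (1 - z) + Im (1 + z) * Im (1 - z) = 1 - (Re z)^2 - (Im z)^2"
    by (simp add: power2_eq_square algebra_simps)
  then show ?thesis using a b by (simp add: Re_divide)
qed

lemma Q_eval:
  fixes z :: complex
  assumes "norm z < 1"
  shows "eval_fps (Abs_fps (\<lambda>n. if n = 0 then 1 else 2)) z = (1 + z) / (1 - z)"
proof -
  have "z \<noteq> 1" using assms by auto
  have g: "(\<lambda>n. 2 * z ^ n) sums (2 * (1 / (1 - z)))"
    using geometric_sums[OF assms] by (intro sums_mult)
  have s: "(\<lambda>n. 2 * z ^ n - (if n = 0 then 1 else 0)) sums (2 * (1 / (1 - z)) - 1)"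
    using sums_diff[OF g sums_single[of 0 "\<lambda>_. 1::complex"]] by simp
  have e: "(\<lambda>n. fps_nth (Abs_fps (\<lambda>n. if n = 0 then 1 else 2)) n * z ^ n) = (\<lambda>n. 2 * z ^ n - (if n = 0 then 1 else 0))"
    by (auto simp: fun_eq_iff)
  have "2 * (1 / (1 - z)) - 1 = (1 + z) / (1 - z)" using \<open>z \<noteq> 1\<close> by (simp add: field_simps)
  then show ?thesis using s e unfolding eval_fps_def by (simp add: sums_iff)
qed

lemma local_inv_exists:
  assumes f: "f \<in> class_A"
  shows "\<exists>g r. local_inverse f g r"
proof -
  have hf: "f holomorphic_on ball 0 1" and f0: "f 0 = 0" and d0: "deriv f 0 = 1"
    using f by (auto simp: class_A_def)
  obtain \<rho> where \<rho>: "\<rho> > 0" "ball (0::complex) \<rho> \<subseteq> ball 0 1" "open (f ` ball 0 \<rho>)" "inj_on f (ball 0 \<rho>)"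
    by (rule has_complex_derivative_locally_invertible[OF hf, of 0]) (use d0 in auto)
  have hf\<rho>: "f holomorphic_on ball 0 \<rho>" using hf \<rho>(2) by (rule holomorphic_on_subset)
  obtain g where g: "g holomorphic_on (f ` ball 0 \<rho>)"
     "\<And>z. z \<in> ball 0 \<rho> \<Longrightarrow> deriv f z * deriv g (f z) = 1" "\<And>z. z \<in> ball 0 \<rho> \<Longrightarrow> g (f z) = z"
    by (rule holomorphic_has_inverse[OF hf\<rho> open_ball \<rho>(4)]) blast
  have "f 0 \<in> f ` ball 0 \<rho>" using \<rho>(1) by simp
  then have "0 \<in> f ` ball 0 \<rho>" using f0 by simp
  then obtain r where r: "r > 0" "ball 0 r \<subseteq> f ` ball 0 \<rho>" by (rule openE[OF \<rho>(3)])
  have "local_inverse f g r"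
    unfolding local_inverse_def
  proof (intro conjI ballI subsetI)
    show "0 < r" by fact
    show "g holomorphic_on ball 0 r" using g(1) r(2) by (rule holomorphic_on_subset)
    show "g 0 = 0" using g(3)[of 0] f0 \<rho>(1) by simp
    fix w :: complex assume w: "w \<in> ball 0 r"
    then obtain z where z: "z \<in> ball 0 \<rho>" "w = f z" using r(2) by auto
    show "f (g w) = w" using z g(3) by simp
  next
    fix y :: complex assume "y \<in> g ` ball 0 r"
    then obtain w where w: "w \<in> ball 0 r" "y = g w" by auto
    then obtain z where z: "z \<in> ball 0 \<rho>" "w = f z" using r(2) by auto
    show "y \<in> ball 0 1" using z w g(3) \<rho>(2) by auto
  qed
  then show ?thesis by blast
qed

lemma Fe_sub: "1 \<le> subdegree (Fe \<beta>)"
proof -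
  have "fps_nth (Fe \<beta>) 1 = 1" by (simp add: Fe_def)
  then have "Fe \<beta> \<noteq> 0" by auto
  moreover have "fps_nth (Fe \<beta>) 0 = 0" by (simp add: Fe_def)
  ultimately show ?thesis by (simp add: Suc_leI subdegree_pos_iff)
qed

lemma pfps_Fe:
  assumes "0 \<le> \<beta>" "\<beta> \<le> 1"
  shows "pfps \<beta> (Fe \<beta>) = Abs_fps (\<lambda>n. if n = 0 then 1 else 2)"
proof (rule fps_ext)
  fix n
  show "fps_nth (pfps \<beta> (Fe \<beta>)) n = fps_nth (Abs_fps (\<lambda>n. if n = 0 then 1 else 2)) n"
  proof (cases "n = 0")
    case True then show ?thesis by (simp add: pfps_nth Fe_def)
  next
    case False
    define d where "d = 1 + real n * (1 - \<beta>)"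
    have d: "d > 0" using assms by (simp add: d_def add_pos_nonneg)
    have e: "fps_nth (Fe \<beta>) (n + 1) = of_real (2 / d)" using False unfolding Fe_def d_def by simp
    have c: "(of_real \<beta> + of_real (1 - \<beta>) * of_nat (n + 1) :: complex) = of_real d"
      by (simp add: d_def algebra_simps)
    have "of_real d * of_real (2 / d) = (2::complex)" using d
      by (simp del: of_real_divide add: of_real_mult[symmetric])
    then show ?thesis using False by (simp only: pfps_nth e c) simp
  qed
qed

lemma Fe_class:
  assumes b: "0 \<le> \<beta>" "\<beta> \<le> 1"
  shows "eval_fps (Fe \<beta>) \<in> class_A_beta \<beta>"
proof -
  define F where "F = Fe \<beta>"
  define f where "f = eval_fps F"
  have R: "fps_conv_radius F \<ge> 1" using Fe_radius[OF b] by (simp add: F_def)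
  have Rp: "fps_conv_radius F > 0" using R by (rule less_le_trans[rotated]) simp
  have hf: "f holomorphic_on ball 0 1" unfolding f_def
    by (intro holomorphic_on_eval_fps ball_eball_mono) (use R in \<open>simp add: one_ereal_def\<close>)
  have f0: "f 0 = 0" by (simp add: f_def eval_fps_at_0 F_def Fe_def)
  have d0: "deriv f 0 = 1"
    using fps_nth_fps_expansion[OF eval_fps_has_fps_expansion[OF Rp], of 1]
    by (simp add: f_def F_def Fe_def)
  have cond: "Re (of_real \<beta> * (f z / z) + of_real (1 - \<beta>) * deriv f z) > 0"
    if z: "z \<in> ball 0 1" "z \<noteq> 0" for z
  proof -
    have nz: "norm z < 1" using z by simp
    have "ereal (norm z) < 1" using nz by (simp add: one_ereal_def)
    then have zR: "ereal (norm z) < fps_conv_radius F" using R by (rule less_le_trans)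
    have sub: "1 \<le> subdegree F" using Fe_sub by (simp add: F_def)
    have E1: "eval_fps (fps_shift 1 F) z = f z / z"
      using eval_fps_shift[OF sub zR] z by (simp add: f_def)
    have E2: "deriv f z = eval_fps (fps_deriv F) z"
      using eval_fps_deriv[OF zR] by (simp add: f_def)
    have r1: "ereal (norm z) < fps_conv_radius (fps_shift 1 F)" using zR by simp
    have r2: "ereal (norm z) < fps_conv_radius (fps_deriv F)"
      using zR fps_conv_radius_deriv[of F] by (rule less_le_trans)
    have rc: "ereal (norm z) < fps_conv_radius (fps_const c * X)"
      if "ereal (norm z) < fps_conv_radius X" for c X
      using that fps_conv_radius_mult[of "fps_const c" X] by (simp add: less_le_trans)
    have E3: "eval_fps (pfps \<beta> F) z = of_real \<beta> * (f z / z) + of_real (1 - \<beta>) * deriv f z"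
    proof -
      have m: "eval_fps (fps_const c * X) z = c * eval_fps X z"
        if "ereal (norm z) < fps_conv_radius X" for c X
        using eval_fps_mult[of z "fps_const c" X] that by simp
      have "eval_fps (pfps \<beta> F) z = eval_fps (fps_const (of_real \<beta>) * fps_shift 1 F) z
          + eval_fps (fps_const (of_real (1 - \<beta>)) * fps_deriv F) z"
        unfolding pfps_def by (rule eval_fps_add[OF rc[OF r1] rc[OF r2]])
      also have "\<dots> = of_real \<beta> * eval_fps (fps_shift 1 F) z + of_real (1 - \<beta>) * eval_fps (fps_deriv F) z"
        by (simp only: m[OF r1] m[OF r2])
      finally show ?thesis by (simp only: E1 E2)
    qed
    have "eval_fps (pfps \<beta> F) z = (1 + z) / (1 - z)"
      using pfps_Fe[OF b] Q_eval[OF nz] by (simp add: F_def)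
    then show ?thesis using E3 Re_moeb[OF nz] by simp
  qed
  show ?thesis
    using hf f0 d0 cond unfolding class_A_beta_def class_A_def f_def F_def by auto
qed

lemma Fe_expansion:
  assumes b: "0 \<le> \<beta>" "\<beta> \<le> 1"
  shows "fps_expansion (eval_fps (Fe \<beta>)) 0 = Fe \<beta>"
proof -
  have R: "fps_conv_radius (Fe \<beta>) > 0"
    using Fe_radius[OF b] by (rule less_le_trans[rotated]) simp
  have h1: "eval_fps (Fe \<beta>) has_fps_expansion Fe \<beta>" by (rule eval_fps_has_fps_expansion[OF R])
  have hol: "eval_fps (Fe \<beta>) holomorphic_on ball 0 1"
    using Fe_class[OF b] by (simp add: class_A_beta_def class_A_def)
  have h2: "eval_fps (Fe \<beta>) has_fps_expansion fps_expansion (eval_fps (Fe \<beta>)) 0"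
    using hol by (intro has_fps_expansion_fps_expansion[of "ball 0 1"]) auto
  show ?thesis using fps_exp_unique[OF h2 h1] by simp
qed

theorem theorem2p2:
  fixes \<beta> :: real
  assumes "0 \<le> \<beta>" and "\<beta> \<le> 1"
  shows "(\<forall>f \<in> class_A_beta \<beta>. \<forall>g r. local_inverse f g r \<longrightarrow>
            cmod (taylor_coeff g 2) \<le> 2 / (2 - \<beta>) \<and>
            cmod (taylor_coeff g 3) \<le> 2 * (8 - 4 * \<beta> - \<beta>\<^sup>2) / ((2 - \<beta>)\<^sup>2 * (3 - 2 * \<beta>)))
       \<and> (\<exists>f \<in> class_A_beta \<beta>. \<exists>g r. local_inverse f g r \<and>
            cmod (taylor_coeff g 2) = 2 / (2 - \<beta>))
       \<and> (\<exists>f \<in> class_A_beta \<beta>. \<exists>g r. local_inverse f g r \<and>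
            cmod (taylor_coeff g 3) = 2 * (8 - 4 * \<beta> - \<beta>\<^sup>2) / ((2 - \<beta>)\<^sup>2 * (3 - 2 * \<beta>)))"
proof -
  define f where "f = eval_fps (Fe \<beta>)"
  have fB: "f \<in> class_A_beta \<beta>" using Fe_class[OF assms] by (simp add: f_def)
  then have fA: "f \<in> class_A" by (simp add: class_A_beta_def)
  obtain g r where g: "local_inverse f g r" using local_inv_exists[OF fA] by blast
  have E: "fps_expansion f 0 = Fe \<beta>" using Fe_expansion[OF assms] by (simp add: f_def)
  have u: "2 - \<beta> > 0" "3 - 2 * \<beta> > 0" using assms by auto
  have F2: "fps_nth (Fe \<beta>) 2 = of_real (2 / (2 - \<beta>))"
  proof -
    have "fps_nth (Fe \<beta>) 2 = of_real (2 / (1 + (real 2 - 1) * (1 - \<beta>)))" unfolding Fe_def by simp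
    also have "1 + (real 2 - 1) * (1 - \<beta>) = 2 - \<beta>" by simp
    finally show ?thesis .
  qed
  have F3: "fps_nth (Fe \<beta>) 3 = of_real (2 / (3 - 2 * \<beta>))"
  proof -
    have "fps_nth (Fe \<beta>) 3 = of_real (2 / (1 + (real 3 - 1) * (1 - \<beta>)))" unfolding Fe_def by simp
    also have "1 + (real 3 - 1) * (1 - \<beta>) = 3 - 2 * \<beta>" by simp
    finally show ?thesis .
  qed
  note inv = inverse_coeffs[OF fA g, unfolded E F2 F3]
  have T2: "cmod (taylor_coeff g 2) = 2 / (2 - \<beta>)"
    unfolding inv(1) using u by (simp only: norm_minus_cancel norm_of_real) simp
  define K where "K = 2 * (2 / (2 - \<beta>))^2 - 2 / (3 - 2 * \<beta>)"
  have Kv: "K = 2 * (8 - 4 * \<beta> - \<beta>\<^sup>2) / ((2 - \<beta>)\<^sup>2 * (3 - 2 * \<beta>))"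
    using u unfolding K_def by (simp add: field_simps) (simp add: power2_eq_square algebra_simps)
  have Kp: "K \<ge> 0"
  proof -
    have bb: "\<beta> * \<beta> \<le> 1" using assms by (simp add: mult_le_one)
    have "0 \<le> 2 * (8 - 4 * \<beta> - \<beta>\<^sup>2)" using bb assms by (simp add: power2_eq_square)
    then show ?thesis unfolding Kv using u by simp
  qed
  have "taylor_coeff g 3 = of_real K" unfolding inv(2) K_def by simp
  then have T3: "cmod (taylor_coeff g 3) = 2 * (8 - 4 * \<beta> - \<beta>\<^sup>2) / ((2 - \<beta>)\<^sup>2 * (3 - 2 * \<beta>))"
    using Kp Kv by (simp only: norm_of_real abs_of_nonneg)
  show ?thesis
    using upper_bounds[OF assms] fB g T2 T3 by blast
qed

end
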